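(* There is a constant $C_d$ depending only on $d$ such that the following holds. Let $B\subset\mathbb{R}^d$ be an open ball of radius $r$, let $\tilde B$ be the ball with the same center and radius $2r$, let $\mathbf f=(f_1,\dots,f_n)\in C^2(\tilde B)$, let $\delta>0$, and let $$L=\sup_{|\beta|=2,\ x\in\tilde B}\|\partial_\beta\mathbf f(x)\|,$$ assumed finite and positive. Then for every $\mathbf q\in\mathbb{Z}^n$ with $\|\mathbf q\|\ge\frac{1}{4nLr^2}$, the set of $x\in B$ satisfying both $$\langle\!\langle\mathbf f(x)\mathbf q\rangle\!\rangle<\delta\qquad\text{and}\qquad\|\nabla\mathbf f(x)\mathbf q\|\ge\sqrt{ndL\|\mathbf q\|}$$ has Lebesgue measure at most $C_d\,\delta\,|B|$.
   Context: $\mathbf f(x)$ is a row vector and $\mathbf q$ a column vector, $\mathbf f(x)\mathbf q=\sum_iq_if_i(x)$. $\nabla\mathbf f(x)$ denotes the $d\times n$ matrix whose rows are the partial derivatives $\partial_i\mathbf f(x)$, so $\nabla\mathbf f(x)\mathbf q\in\mathbb{R}^d$ is the gradient of $x\mapsto\mathbf f(x)\mathbf q$. All norms are sup-norms: $\|\mathbf v\|=\max_i|v_i|$. $\langle\!\langle t\rangle\!\rangle$ is the distance from $t$ to the nearest integer. $|\cdot|$ is Lebesgue measure. For a multiindex $\beta$, $|\beta|$ is its order and $\partial_\beta$ the corresponding partial derivative. *)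

theory Defs
  imports "HOL-Analysis.Analysis"
begin

definition dist_int :: "real \<Rightarrow> real" where
  "dist_int t = min (t - of_int \<lfloor>t\<rfloor>) (of_int \<lceil>t\<rceil> - t)"

definition partial :: "'d::finite \<Rightarrow> (real^'d \<Rightarrow> real) \<Rightarrow> real^'d \<Rightarrow> real" where
  "partial j g x = frechet_derivative g (at x) (axis j 1)"

definition C2_on :: "(real^'d::finite) set \<Rightarrow> (real^'d \<Rightarrow> real) \<Rightarrow> bool" where
  "C2_on S g \<longleftrightarrow>
     (\<forall>x\<in>S. g differentiable (at x)) \<and>
     (\<forall>j. \<forall>x\<in>S. (partial j g) differentiable (at x)) \<and>
     (\<forall>j k. continuous_on S (partial k (partial j g)))"

definition qnorm :: "nat \<Rightarrow> (nat \<Rightarrow> int) \<Rightarrow> real" where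
  "qnorm n q = Max {\<bar>real_of_int (q i)\<bar> | i. i < n}"

definition grad_norm :: "nat \<Rightarrow> (nat \<Rightarrow> real^'d::finite \<Rightarrow> real) \<Rightarrow> (nat \<Rightarrow> int) \<Rightarrow> real^'d \<Rightarrow> real" where
  "grad_norm n f q x = Max (range (\<lambda>j. \<bar>\<Sum>i<n. real_of_int (q i) * partial j (f i) x\<bar>))"

end

theory Submission
  imports Defs
begin


lemma dist_int_near: "dist_int t < d \<Longrightarrow> \<exists>k::int. \<bar>t - of_int k\<bar> < d"
  unfolding dist_int_def
  by (metis abs_of_nonneg abs_minus_commute diff_ge_0_iff_ge ceiling_correct min_less_iff_disj of_int_floor_le)

lemma mvt_interval:
  fixes \<phi> \<phi>' :: "real \<Rightarrow> real"
  assumes der: "\<And>s. s \<in> {lo..hi} \<Longrightarrow> (\<phi> has_real_derivative \<phi>' s) (at s)"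
    and "s1 \<in> {lo..hi}" "s2 \<in> {lo..hi}" "s1 \<le> s2"
  shows "\<exists>z\<in>{lo..hi}. \<phi> s2 - \<phi> s1 = (s2 - s1) * \<phi>' z"
proof (cases "s1 = s2")
  case True then show ?thesis using assms by auto
next
  case False
  then have "s1 < s2" using assms by auto
  from MVT2[OF this, of \<phi> \<phi>'] obtain z where "s1 < z" "z < s2" "\<phi> s2 - \<phi> s1 = (s2 - s1) * \<phi>' z"
    using assms der by (metis atLeastAtMost_iff order.trans less_imp_le)
  then show ?thesis using assms by (intro bexI[of _ z]) auto
qed

lemma aux_div: "(s::real) > 0 \<Longrightarrow> (s * s)/(2 * s) = s/2" by simp

lemma local1d:
  fixes \<phi> \<phi>' :: "real \<Rightarrow> real"
  assumes K: "K > 0" and hdef: "h = 1/(2* sqrt K)" and dpos: "\<delta> > 0"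
    and der: "\<And>s. s \<in> {t0-h..t0+h} \<Longrightarrow> (\<phi> has_real_derivative \<phi>' s) (at s)"
    and lip: "\<And>s. s \<in> {t0-h..t0+h} \<Longrightarrow> \<bar>\<phi>' s - \<phi>' t0\<bar> \<le> K * \<bar>s - t0\<bar>"
    and big: "sqrt K \<le> \<bar>\<phi>' t0\<bar>"
  shows "\<exists>W \<in> sets lborel. {s \<in> {t0-h..t0+h}. dist_int (\<phi> s) < \<delta>} \<subseteq> W
            \<and> emeasure lborel W \<le> ennreal (104*\<delta>*h)"
proof -
  define I where "I = {t0-h..t0+h}"
  define a where "a = \<bar>\<phi>' t0\<bar>"
  have sK: "sqrt K > 0" using K by simp
  have apos: "a > 0" using sK big a_def by linarith
  have hpos: "h > 0" using hdef sK by simp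
  have Kh: "K * h = sqrt K / 2"
  proof -
    have KK: "sqrt K * sqrt K = K" using K real_sqrt_mult_self[of K] by simp
    have "K * h = (sqrt K * sqrt K) / (2 * sqrt K)" by (subst KK) (simp add: hdef)
    also have "\<dots> = sqrt K / 2" using sK by (metis (no_types) aux_div)
    finally show ?thesis .
  qed
  have ah: "a * h \<ge> 1/2"
  proof -
    have "h * sqrt K \<le> h * a" using hpos big a_def by (intro mult_left_mono) auto
    moreover have "h * sqrt K = 1/2" using hdef sK by simp
    ultimately show ?thesis by (simp add: mult.commute)
  qed
  have ainv: "1 / a \<le> 2 * h" using ah apos by (simp add: field_simps)
  have bnd: "a/2 \<le> \<bar>\<phi>' s\<bar> \<and> \<bar>\<phi>' s\<bar> \<le> 3*a/2" if "s \<in> I" for s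
  proof -
    have "\<bar>s - t0\<bar> \<le> h" using that I_def by auto
    then have "K * \<bar>s - t0\<bar> \<le> K * h" using K by (intro mult_left_mono) auto
    then have "\<bar>\<phi>' s - \<phi>' t0\<bar> \<le> a/2" using lip[of s, OF that[unfolded I_def]] Kh big a_def by linarith
    then show ?thesis using a_def by linarith
  qed
  have sep: "a/2 * \<bar>s1 - s2\<bar> \<le> \<bar>\<phi> s1 - \<phi> s2\<bar>" if "s1 \<in> I" "s2 \<in> I" for s1 s2
  proof -
    have *: "a/2 * \<bar>u2 - u1\<bar> \<le> \<bar>\<phi> u2 - \<phi> u1\<bar>" if u: "u1 \<in> I" "u2 \<in> I" "u1 \<le> u2" for u1 u2
    proof -
      obtain z where z: "z \<in> I" "\<phi> u2 - \<phi> u1 = (u2 - u1) * \<phi>' z"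
        using mvt_interval[of "t0-h" "t0+h" \<phi> \<phi>' u1 u2, OF der] u unfolding I_def by blast
      have "a/2 * \<bar>u2 - u1\<bar> \<le> \<bar>\<phi>' z\<bar> * \<bar>u2 - u1\<bar>"
        using bnd[OF z(1)] by (intro mult_right_mono) auto
      then show ?thesis using z by (simp add: abs_mult mult.commute)
    qed
    show ?thesis
      using *[of s1 s2] *[of s2 s1] that by (cases "s1 \<le> s2") (auto simp: abs_minus_commute)
  qed
  have rng: "\<bar>\<phi> s - \<phi> t0\<bar> \<le> 3*a*h/2" if "s \<in> I" for s
  proof -
    have t0I: "t0 \<in> I" using I_def hpos by auto
    have *: "\<bar>\<phi> u2 - \<phi> u1\<bar> \<le> 3*a/2 * \<bar>u2 - u1\<bar>" if u: "u1 \<in> I" "u2 \<in> I" "u1 \<le> u2" for u1 u2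
    proof -
      obtain z where z: "z \<in> I" "\<phi> u2 - \<phi> u1 = (u2 - u1) * \<phi>' z"
        using mvt_interval[of "t0-h" "t0+h" \<phi> \<phi>' u1 u2, OF der] u unfolding I_def by blast
      have "\<bar>\<phi>' z\<bar> * \<bar>u2 - u1\<bar> \<le> 3*a/2 * \<bar>u2 - u1\<bar>"
        using bnd[OF z(1)] by (intro mult_right_mono) auto
      then show ?thesis using z by (simp add: abs_mult mult.commute)
    qed
    have "\<bar>\<phi> s - \<phi> t0\<bar> \<le> 3*a/2 * \<bar>s - t0\<bar>"
      using *[of s t0] *[of t0 s] that t0I by (cases "t0 \<le> s") (auto simp: abs_minus_commute)
    also have "\<dots> \<le> 3*a/2 * h" using that I_def apos by (intro mult_left_mono) auto
    finally show ?thesis by simp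
  qed
  show ?thesis
  proof (cases "\<delta> \<ge> 1")
    case True
    have "emeasure lborel {t0-h..t0+h} = ennreal (2*h)" using hpos by simp
    also have "\<dots> \<le> ennreal (104*\<delta>*h)" using True hpos by (intro ennreal_leI) auto
    finally show ?thesis by (intro bexI[of _ "{t0-h..t0+h}"]) auto
  next
    case False
    define lo where "lo = \<phi> t0 - 3*a*h/2 - \<delta>"
    define hi where "hi = \<phi> t0 + 3*a*h/2 + \<delta>"
    define Ks where "Ks = {\<lfloor>lo\<rfloor>..\<lceil>hi\<rceil>}"
    define A where "A k = {s \<in> I. \<bar>\<phi> s - of_int k\<bar> < \<delta>}" for k :: int
    define sk where "sk k = (SOME s. s \<in> A k)" for k
    define Wk where "Wk k = (if A k = {} then {} else {sk k - 4*\<delta>/a .. sk k + 4*\<delta>/a})" for k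
    define W where "W = (\<Union>k\<in>Ks. Wk k)"
    have cover: "{s \<in> I. dist_int (\<phi> s) < \<delta>} \<subseteq> W"
    proof
      fix s assume "s \<in> {s \<in> I. dist_int (\<phi> s) < \<delta>}"
      then have sI: "s \<in> I" and d: "dist_int (\<phi> s) < \<delta>" by auto
      obtain k where k: "\<bar>\<phi> s - of_int k\<bar> < \<delta>" using dist_int_near[OF d] by auto
      have "\<bar>of_int k - \<phi> t0\<bar> < \<delta> + 3*a*h/2" using k rng[OF sI] by linarith
      then have "lo < of_int k" "of_int k < hi" using lo_def hi_def by linarith+
      have kK: "k \<in> Ks"
      proof -
        have "real_of_int \<lfloor>lo\<rfloor> < real_of_int k" using of_int_floor_le[of lo] \<open>lo < of_int k\<close> by linarith
        moreover have "real_of_int k < real_of_int \<lceil>hi\<rceil>" using ceiling_correct[of hi] \<open>of_int k < hi\<close> by linarith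
        ultimately show ?thesis unfolding Ks_def by simp
      qed
      have sA: "s \<in> A k" using sI k A_def by auto
      then have ne: "A k \<noteq> {}" by auto
      have skA: "sk k \<in> A k" using sA sk_def by (metis someI)
      then have "\<bar>\<phi> (sk k) - of_int k\<bar> < \<delta>" "sk k \<in> I" using A_def by auto
      then have "\<bar>\<phi> s - \<phi> (sk k)\<bar> < 2*\<delta>" using k by linarith
      moreover have "a/2 * \<bar>s - sk k\<bar> \<le> \<bar>\<phi> s - \<phi> (sk k)\<bar>" using sep sI \<open>sk k \<in> I\<close> by blast
      ultimately have "a/2 * \<bar>s - sk k\<bar> < 2*\<delta>" by linarith
      then have "\<bar>s - sk k\<bar> < 4*\<delta>/a" using apos by (simp add: field_simps)
      then have "s \<in> Wk k" using ne Wk_def by auto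
      then show "s \<in> W" using kK W_def by auto
    qed
    have Wk_meas: "emeasure lborel (Wk k) \<le> ennreal (8*\<delta>/a)" for k
      using apos dpos by (auto simp: Wk_def)
    have finK: "finite Ks" using Ks_def by simp
    have "emeasure lborel W \<le> (\<Sum>k\<in>Ks. emeasure lborel (Wk k))"
      unfolding W_def by (intro emeasure_subadditive_finite finK) (auto simp: Wk_def)
    also have "\<dots> \<le> (\<Sum>k\<in>Ks. ennreal (8*\<delta>/a))" by (intro sum_mono Wk_meas)
    also have "\<dots> = ennreal (real (card Ks) * (8*\<delta>/a))"
      using apos dpos by (subst ennreal_mult) (auto simp: ennreal_of_nat_eq_real_of_nat)
    also have "\<dots> \<le> ennreal (104*\<delta>*h)"
    proof (intro ennreal_leI)
      have "real (card Ks) = real_of_int (\<lceil>hi\<rceil> - \<lfloor>lo\<rfloor> + 1)"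
      proof -
        have "lo \<le> hi" using lo_def hi_def mult_pos_pos[OF apos hpos] dpos by simp
        then have "\<lfloor>lo\<rfloor> \<le> \<lceil>hi\<rceil>"
        proof -
          have "real_of_int \<lfloor>lo\<rfloor> \<le> real_of_int \<lceil>hi\<rceil>"
            using \<open>lo \<le> hi\<close> of_int_floor_le[of lo] le_of_int_ceiling[of hi] by linarith
          then show ?thesis by simp
        qed
        then show ?thesis unfolding Ks_def by simp
      qed
      also have "\<dots> \<le> hi - lo + 3"
        using ceiling_correct[of hi] of_int_floor_le[of lo] by linarith
      also have "\<dots> = 3*a*h + 2*\<delta> + 3" using lo_def hi_def by simp
      finally have c: "real (card Ks) \<le> 3*a*h + 2*\<delta> + 3" .
      have "real (card Ks) * (8*\<delta>/a) \<le> (3*a*h + 2*\<delta> + 3) * (8*\<delta>/a)"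
        using apos dpos c by (intro mult_right_mono) auto
      also have "\<dots> = 24*\<delta>*h + (16*\<delta>*\<delta> + 24*\<delta>) * (1/a)"
        using apos by (simp add: field_simps)
      also have "\<dots> \<le> 24*\<delta>*h + (40*\<delta>) * (2*h)"
      proof -
        have "\<delta> * \<delta> \<le> \<delta> * 1" using False dpos by (intro mult_left_mono) auto
        then have "16*\<delta>*\<delta> + 24*\<delta> \<le> 40*\<delta>" by linarith
        then show ?thesis using dpos apos ainv by (intro add_left_mono mult_mono) auto
      qed
      finally show "real (card Ks) * (8*\<delta>/a) \<le> 104*\<delta>*h" by simp
    qed
    finally show ?thesis using cover I_def W_def Wk_def by (intro bexI[of _ W]) auto
  qed
qed


lemma line1d:
  fixes \<phi> \<phi>' :: "real \<Rightarrow> real" and S :: "real set"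
  assumes K: "K > 0" and hdef: "h = 1/(2* sqrt K)" and dpos: "\<delta> > 0" and hr: "h \<le> r"
    and Ssub: "S \<subseteq> {-r..r}"
    and Sprop: "\<And>t. t \<in> S \<Longrightarrow> dist_int (\<phi> t) < \<delta> \<and> sqrt K \<le> \<bar>\<phi>' t\<bar> \<and>
        (\<forall>s\<in>{t-h..t+h}. (\<phi> has_real_derivative \<phi>' s) (at s) \<and> \<bar>\<phi>' s - \<phi>' t\<bar> \<le> K * \<bar>s - t\<bar>)"
  shows "\<exists>W\<in>sets lborel. S \<subseteq> W \<and> emeasure lborel W \<le> ennreal (312*\<delta>*r)"
proof -
  have sK: "sqrt K > 0" using K by simp
  have hpos: "h > 0" using hdef sK by simp
  have rpos: "r > 0" using hpos hr by linarith
  have "\<forall>t\<in>S. \<exists>W\<in>sets lborel. {s \<in> {t-h..t+h}. dist_int (\<phi> s) < \<delta>} \<subseteq> W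
            \<and> emeasure lborel W \<le> ennreal (104*\<delta>*h)"
  proof
    fix t assume "t \<in> S"
    note P = Sprop[OF this]
    show "\<exists>W\<in>sets lborel. {s \<in> {t-h..t+h}. dist_int (\<phi> s) < \<delta>} \<subseteq> W
            \<and> emeasure lborel W \<le> ennreal (104*\<delta>*h)"
      by (rule local1d[OF K hdef dpos]) (use P in auto)
  qed
  then obtain Wf where Wf: "\<And>t. t \<in> S \<Longrightarrow> Wf t \<in> sets lborel \<and>
      {s \<in> {t-h..t+h}. dist_int (\<phi> s) < \<delta>} \<subseteq> Wf t \<and> emeasure lborel (Wf t) \<le> ennreal (104*\<delta>*h)"
    by metis
  define N where "N = nat \<lfloor>2*r/h\<rfloor>"
  define J where "J m = {-r + real m * h .. -r + (real m + 1) * h}" for m :: nat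
  define tm where "tm m = (SOME t. t \<in> S \<inter> J m)" for m
  define Wm where "Wm m = (if S \<inter> J m = {} then {} else Wf (tm m))" for m
  define W where "W = (\<Union>m\<in>{0..N}. Wm m)"
  have Wm_sets: "Wm m \<in> sets lborel" for m
  proof (cases "S \<inter> J m = {}")
    case False
    then have "tm m \<in> S \<inter> J m" unfolding tm_def by (metis all_not_in_conv someI)
    then show ?thesis using Wf False Wm_def by auto
  qed (auto simp: Wm_def)
  have Wm_meas: "emeasure lborel (Wm m) \<le> ennreal (104*\<delta>*h)" for m
  proof (cases "S \<inter> J m = {}")
    case False
    then have "tm m \<in> S \<inter> J m" unfolding tm_def by (metis all_not_in_conv someI)
    then show ?thesis using Wf False Wm_def by auto
  qed (auto simp: Wm_def)
  have cover: "S \<subseteq> W"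
  proof
    fix t assume tS: "t \<in> S"
    then have tr: "-r \<le> t" "t \<le> r" using Ssub by auto
    define m where "m = nat \<lfloor>(t + r)/h\<rfloor>"
    have nn: "0 \<le> (t + r)/h" using tr hpos by simp
    then have mreal: "real m = of_int \<lfloor>(t + r)/h\<rfloor>" using m_def by simp
    have "real m \<le> (t + r)/h" "(t + r)/h < real m + 1"
      using mreal of_int_floor_le[of "(t+r)/h"] floor_correct[of "(t+r)/h"] by linarith+
    then have m1: "real m * h \<le> t + r" and m2: "t + r < (real m + 1) * h"
      using hpos by (simp_all add: field_simps)
    have tJ: "t \<in> J m" using m1 m2 J_def by auto
    have "(t + r)/h \<le> 2*r/h" using tr hpos by (simp add: divide_right_mono)
    then have "\<lfloor>(t + r)/h\<rfloor> \<le> \<lfloor>2*r/h\<rfloor>" by (rule floor_mono)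
    then have mN: "m \<in> {0..N}" using m_def N_def by auto
    have ne: "S \<inter> J m \<noteq> {}" using tS tJ by auto
    then have tmJ: "tm m \<in> S \<inter> J m" unfolding tm_def by (metis all_not_in_conv someI)
    then have "\<bar>t - tm m\<bar> \<le> h" using tJ J_def by (auto simp: algebra_simps abs_le_iff)
    then have "t \<in> {s \<in> {tm m - h..tm m + h}. dist_int (\<phi> s) < \<delta>}"
      using Sprop[OF tS] by (auto simp: abs_le_iff)
    then have "t \<in> Wf (tm m)" using Wf tmJ by blast
    then show "t \<in> W" using W_def Wm_def ne mN by auto
  qed
  have "emeasure lborel W \<le> (\<Sum>m\<in>{0..N}. emeasure lborel (Wm m))"
    unfolding W_def by (intro emeasure_subadditive_finite) (use Wm_sets in auto)
  also have "\<dots> \<le> (\<Sum>m\<in>{0..N}. ennreal (104*\<delta>*h))" by (intro sum_mono Wm_meas)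
  also have "\<dots> = ennreal (real (N+1) * (104*\<delta>*h))"
    using hpos dpos by (subst ennreal_mult) (auto simp: ennreal_of_nat_eq_real_of_nat)
  also have "\<dots> \<le> ennreal (312*\<delta>*r)"
  proof (intro ennreal_leI)
    have "real N \<le> 2*r/h" unfolding N_def using rpos hpos by (simp add: of_nat_nat)
    then have "real N * h \<le> 2*r" using hpos by (simp add: field_simps)
    then have "real (N+1) * h \<le> 3 * r" using hr by (simp add: algebra_simps)
    then have "real (N+1) * h * (104*\<delta>) \<le> 3 * r * (104*\<delta>)" using dpos by (intro mult_right_mono) auto
    then show "real (N+1) * (104*\<delta>*h) \<le> 312*\<delta>*r" by (simp add: algebra_simps)
  qed
  finally show ?thesis using cover W_def Wm_sets by (intro bexI[of _ W]) auto
qed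



lemma line_deriv:
  fixes g :: "'a::real_normed_vector \<Rightarrow> real"
  assumes "g differentiable (at (x + s *\<^sub>R u))"
  shows "((\<lambda>s. g (x + s *\<^sub>R u)) has_real_derivative frechet_derivative g (at (x + s *\<^sub>R u)) u) (at s)"
proof -
  let ?F = "frechet_derivative g (at (x + s *\<^sub>R u))"
  have g: "(g has_derivative ?F) (at (x + s *\<^sub>R u))"
    using assms frechet_derivative_works by blast
  have l: "((\<lambda>s. x + s *\<^sub>R u) has_derivative (\<lambda>h. h *\<^sub>R u)) (at s)"
    by (auto intro!: derivative_eq_intros)
  have c: "((\<lambda>s. g (x + s *\<^sub>R u)) has_derivative (\<lambda>h. ?F (h *\<^sub>R u))) (at s)"
    using diff_chain_at[OF l g] by (simp add: o_def)
  have lin: "linear ?F" using g has_derivative_linear by blast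
  have "(\<lambda>h. ?F (h *\<^sub>R u)) = (\<lambda>h. ?F u * h)"
    using linear.scaleR[OF lin] by (auto simp: mult.commute)
  then show ?thesis using c unfolding has_field_derivative_def by simp
qed

lemma dist_int_measurable[measurable]: "dist_int \<in> borel_measurable borel"
  unfolding dist_int_def[abs_def] by measurable

lemma fubini_line:
  fixes E :: "(real^'d::finite) set" and u :: "real^'d"
  assumes Em: "E \<in> sets borel" and Esub: "E \<subseteq> ball c r" and rpos: "r > 0" and nu: "norm u = 1"
    and line: "\<And>x. \<exists>W\<in>sets lborel. {t \<in> {-r..r}. x + t *\<^sub>R u \<in> E} \<subseteq> W \<and> emeasure lborel W \<le> ennreal B"
  shows "emeasure lborel E * ennreal (2*r) \<le> ennreal B * emeasure lborel (ball c (2*r))"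
proof -
  have ps: "pair_sigma_finite (lborel::(real^'d) measure) (lborel::real measure)"
    by (simp add: pair_sigma_finite_def sigma_finite_lborel)
  have tr: "(\<integral>\<^sup>+x. indicator E (x + t *\<^sub>R u) \<partial>lborel) = emeasure lborel E" for t
  proof -
    have "(\<integral>\<^sup>+x. indicator E (t *\<^sub>R u + x) \<partial>lborel) = (\<integral>\<^sup>+y. indicator E y \<partial>(distr lborel borel ((+) (t *\<^sub>R u))))"
      using Em by (subst nn_integral_distr) auto
    also have "\<dots> = emeasure lborel E" using Em by (simp add: lborel_distr_plus)
    finally show ?thesis by (simp add: add.commute)
  qed
  have "emeasure lborel E * ennreal (2*r) = (\<integral>\<^sup>+t. emeasure lborel E * indicator {-r..r} t \<partial>lborel)"
    using rpos by (subst nn_integral_cmult_indicator) auto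
  also have "\<dots> = (\<integral>\<^sup>+t. (\<integral>\<^sup>+x. indicator E (x + t *\<^sub>R u) * indicator {-r..r} t \<partial>lborel) \<partial>lborel)"
    using Em by (simp add: nn_integral_multc tr)
  also have "\<dots> = (\<integral>\<^sup>+x. (\<integral>\<^sup>+t. indicator E (x + t *\<^sub>R u) * indicator {-r..r} t \<partial>lborel) \<partial>lborel)"
    by (rule pair_sigma_finite.Fubini'[OF ps]) (use Em in measurable)
  also have "\<dots> \<le> (\<integral>\<^sup>+x. ennreal B * indicator (ball c (2*r)) x \<partial>lborel)"
  proof (intro nn_integral_mono)
    fix x :: "real^'d"
    show "(\<integral>\<^sup>+t. indicator E (x + t *\<^sub>R u) * indicator {-r..r} t \<partial>lborel) \<le> ennreal B * indicator (ball c (2*r)) x"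
    proof (cases "x \<in> ball c (2*r)")
      case True
      obtain W where W: "W \<in> sets lborel" "{t \<in> {-r..r}. x + t *\<^sub>R u \<in> E} \<subseteq> W" "emeasure lborel W \<le> ennreal B"
        using line by blast
      have "(\<integral>\<^sup>+t. indicator E (x + t *\<^sub>R u) * indicator {-r..r} t \<partial>lborel) \<le> (\<integral>\<^sup>+t. indicator W t \<partial>lborel)"
        using W(2) by (intro nn_integral_mono) (auto simp: indicator_def)
      also have "\<dots> = emeasure lborel W" using W(1) by simp
      finally show ?thesis using W(3) True by simp
    next
      case False
      have z: "indicator E (x + t *\<^sub>R u) * indicator {-r..r} t = (0::ennreal)" for t
      proof (rule ccontr)
        assume "indicator E (x + t *\<^sub>R u) * indicator {-r..r} t \<noteq> (0::ennreal)"
        then have a: "x + t *\<^sub>R u \<in> E" and b: "\<bar>t\<bar> \<le> r" by (auto simp: indicator_def split: if_splits)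
        have "dist c (x + t *\<^sub>R u) < r" using a Esub by auto
        moreover have "dist (x + t *\<^sub>R u) x = \<bar>t\<bar>" using nu by (simp add: dist_norm)
        ultimately have "dist c x < 2*r" using b dist_triangle[of c x "x + t *\<^sub>R u"] by linarith
        then show False using False by simp
      qed
      have "(\<integral>\<^sup>+t. indicator E (x + t *\<^sub>R u) * indicator {-r..r} t \<partial>lborel) = (\<integral>\<^sup>+(t::real). 0 \<partial>lborel)"
        by (simp only: z)
      then show ?thesis by simp
    qed
  qed
  also have "\<dots> = ennreal B * emeasure lborel (ball c (2*r))"
    by (rule nn_integral_cmult_indicator) simp
  finally show ?thesis .
qed


lemma sum_line_deriv:
  fixes F :: "nat \<Rightarrow> 'a::real_normed_vector \<Rightarrow> real"
  assumes "\<And>i. i < n \<Longrightarrow> F i differentiable (at (x + s *\<^sub>R u))"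
  shows "((\<lambda>s. \<Sum>i<n. a i * F i (x + s *\<^sub>R u)) has_real_derivative
            (\<Sum>i<n. a i * frechet_derivative (F i) (at (x + s *\<^sub>R u)) u)) (at s)"
  by (intro DERIV_sum DERIV_cmult line_deriv) (use assms in auto)

lemma lebesgue_borel_eq: "S \<in> sets borel \<Longrightarrow> emeasure lebesgue S = emeasure lborel S"
  by simp

theorem theorem1p3:
  shows "\<exists>C::real. \<forall>(n::nat) (c::real^'d::finite) (r::real) (f::nat \<Rightarrow> real^'d \<Rightarrow> real)
           (\<delta>::real) (L::real) (q::nat \<Rightarrow> int).
     n \<ge> 1 \<and> r > 0 \<and> \<delta> > 0 \<and>
     (\<forall>i<n. C2_on (ball c (2*r)) (f i)) \<and>
     bdd_above {\<bar>partial k (partial j (f i)) x\<bar> | x i j k. x \<in> ball c (2*r) \<and> i < n} \<and>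
     L = Sup {\<bar>partial k (partial j (f i)) x\<bar> | x i j k. x \<in> ball c (2*r) \<and> i < n} \<and>
     L > 0 \<and>
     qnorm n q \<ge> 1 / (4 * real n * L * r\<^sup>2)
     \<longrightarrow>
     emeasure lebesgue
       {x \<in> ball c r. dist_int (\<Sum>i<n. real_of_int (q i) * f i x) < \<delta> \<and>
                      grad_norm n f q x \<ge> sqrt (real n * real CARD('d) * L * qnorm n q)}
       \<le> ennreal (C * \<delta>) * emeasure lebesgue (ball c r)"
proof (intro exI[of _ "real CARD('d) * (156 * 2 ^ CARD('d))"] allI impI)
  fix n :: nat and c :: "real^'d" and r :: real and f :: "nat \<Rightarrow> real^'d \<Rightarrow> real"
    and \<delta> L :: real and q :: "nat \<Rightarrow> int"
  assume H: "n \<ge> 1 \<and> r > 0 \<and> \<delta> > 0 \<and>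
     (\<forall>i<n. C2_on (ball c (2*r)) (f i)) \<and>
     bdd_above {\<bar>partial k (partial j (f i)) x\<bar> | x i j k. x \<in> ball c (2*r) \<and> i < n} \<and>
     L = Sup {\<bar>partial k (partial j (f i)) x\<bar> | x i j k. x \<in> ball c (2*r) \<and> i < n} \<and>
     L > 0 \<and>
     qnorm n q \<ge> 1 / (4 * real n * L * r\<^sup>2)"
  then have n1: "n \<ge> 1" and rpos: "r > 0" and dpos: "\<delta> > 0"
    and C2: "\<And>i. i < n \<Longrightarrow> C2_on (ball c (2*r)) (f i)"
    and bdd: "bdd_above {\<bar>partial k (partial j (f i)) x\<bar> | x i j k. x \<in> ball c (2*r) \<and> i < n}"
    and Ldef: "L = Sup {\<bar>partial k (partial j (f i)) x\<bar> | x i j k. x \<in> ball c (2*r) \<and> i < n}"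
    and Lpos: "L > 0" and Qge: "qnorm n q \<ge> 1 / (4 * real n * L * r\<^sup>2)"
    by auto
  define Q where "Q = qnorm n q"
  define D where "D = CARD('d)"
  define K where "K = real n * L * Q"
  define h where "h = 1 / (2 * sqrt K)"
  define T where "T = sqrt (real n * real D * L * Q)"
  define g where "g y = (\<Sum>i<n. real_of_int (q i) * f i y)" for y
  define G1 where "G1 j y = (\<Sum>i<n. real_of_int (q i) * partial j (f i) y)" for j y
  define G2 where "G2 j y = (\<Sum>i<n. real_of_int (q i) * partial j (partial j (f i)) y)" for j y
  define E where "E j = {x \<in> ball c r. dist_int (g x) < \<delta> \<and> T \<le> \<bar>G1 j x\<bar>}" for j
  have npos: "real n > 0" using n1 by simp
  have Qpos: "Q > 0"
  proof -
    have "0 < 1 / (4 * real n * L * r\<^sup>2)" using npos Lpos rpos by simp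
    then show ?thesis using Qge Q_def by linarith
  qed
  have Kpos: "K > 0" using npos Lpos Qpos K_def by simp
  have sKpos: "sqrt K > 0" using Kpos by simp
  have hpos: "h > 0" using h_def sKpos by simp
  have hr: "h \<le> r"
  proof -
    have "1 \<le> Q * (4 * real n * L * r\<^sup>2)"
      using Qge Q_def npos Lpos rpos by (simp add: field_simps)
    then have "1 \<le> 4 * r\<^sup>2 * K" unfolding K_def by (simp add: algebra_simps)
    also have "\<dots> = (2 * r * sqrt K)\<^sup>2" using Kpos by (simp add: power2_eq_square algebra_simps)
    finally have "1 \<le> (2 * r * sqrt K)\<^sup>2" .
    then have "sqrt 1 \<le> sqrt ((2 * r * sqrt K)\<^sup>2)" by (rule real_sqrt_le_mono)
    then have "1 \<le> 2 * r * sqrt K"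
      using rpos sKpos by (simp only: real_sqrt_abs real_sqrt_one) simp
    then show ?thesis unfolding h_def using sKpos rpos by (simp add: field_simps)
  qed
  have Dpos: "real D \<ge> 1" unfolding D_def by (simp add: Suc_le_eq)
  have KT: "sqrt K \<le> T"
  proof -
    have "K \<le> real n * real D * L * Q" unfolding K_def
      using Dpos npos Lpos Qpos by (simp add: mult_le_cancel_left1 mult.assoc mult.left_commute[of "real D"])
    then show ?thesis unfolding T_def by (rule real_sqrt_le_mono)
  qed
  have qle: "\<bar>real_of_int (q i)\<bar> \<le> Q" if "i < n" for i
  proof -
    have fin: "finite {\<bar>real_of_int (q i)\<bar> | i. i < n}" by simp
    show ?thesis unfolding Q_def qnorm_def using that by (intro Max_ge[OF fin]) auto
  qed
  have Lle: "\<bar>partial k (partial j (f i)) y\<bar> \<le> L" if "y \<in> ball c (2*r)" "i < n" for k j i y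
    unfolding Ldef using that by (intro cSup_upper[OF _ bdd]) blast
  have dif1: "f i differentiable (at y)" if "i < n" "y \<in> ball c (2*r)" for i y
    using C2[OF that(1)] that(2) unfolding C2_on_def by blast
  have dif2: "partial j (f i) differentiable (at y)" if "i < n" "y \<in> ball c (2*r)" for i j y
    using C2[OF that(1)] that(2) unfolding C2_on_def by blast
  have G2le: "\<bar>G2 j y\<bar> \<le> K" if "y \<in> ball c (2*r)" for j y
  proof -
    have "\<bar>G2 j y\<bar> \<le> (\<Sum>i<n. \<bar>real_of_int (q i) * partial j (partial j (f i)) y\<bar>)"
      unfolding G2_def by (rule sum_abs)
    also have "\<dots> \<le> (\<Sum>i<n. Q * L)"
      using qle Lle[OF that] Qpos by (intro sum_mono) (auto simp: abs_mult intro!: mult_mono)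
    also have "\<dots> = K" unfolding K_def by simp
    finally show ?thesis .
  qed
  let ?u = "\<lambda>j::'d. axis j (1::real)"
  have inball: "x + s *\<^sub>R ?u j \<in> ball c (2*r)" if "x + t *\<^sub>R ?u j \<in> ball c r" "\<bar>s - t\<bar> \<le> h" for x s t j
  proof -
    have "dist (x + t *\<^sub>R ?u j) (x + s *\<^sub>R ?u j) = \<bar>s - t\<bar>"
      by (simp add: dist_norm algebra_simps flip: scaleR_diff_left)
    moreover have "dist c (x + t *\<^sub>R ?u j) < r" using that by simp
    ultimately have "dist c (x + s *\<^sub>R ?u j) < 2*r"
      using dist_triangle[of c "x + s *\<^sub>R ?u j" "x + t *\<^sub>R ?u j"] that(2) hr by linarith
    then show ?thesis by simp
  qed
  have derg: "((\<lambda>s. g (x + s *\<^sub>R ?u j)) has_real_derivative G1 j (x + s *\<^sub>R ?u j)) (at s)"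
    if "x + s *\<^sub>R ?u j \<in> ball c (2*r)" for x s j
    unfolding g_def G1_def partial_def using dif1 that by (intro sum_line_deriv) auto
  have derG1: "((\<lambda>s. G1 j (x + s *\<^sub>R ?u j)) has_real_derivative G2 j (x + s *\<^sub>R ?u j)) (at s)"
    if "x + s *\<^sub>R ?u j \<in> ball c (2*r)" for x s j
    unfolding G1_def G2_def partial_def[of j "partial j _"] using dif2 that by (intro sum_line_deriv) auto
  have ballsub: "ball c r \<subseteq> ball c (2*r)" using rpos by (auto simp: subset_iff)
  have cf: "continuous_on (ball c r) (f i)" if "i < n" for i
    by (rule differentiable_imp_continuous_on, rule differentiable_at_imp_differentiable_on)
       (use dif1 that ballsub in auto)
  have cf1: "continuous_on (ball c r) (partial j (f i))" if "i < n" for i j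
    by (rule differentiable_imp_continuous_on, rule differentiable_at_imp_differentiable_on)
       (use dif2 that ballsub in auto)
  have cg: "continuous_on (ball c r) g" unfolding g_def by (intro continuous_intros cf) auto
  have cG1: "continuous_on (ball c r) (G1 j)" for j unfolding G1_def by (intro continuous_intros cf1) auto
  have Em: "E j \<in> sets borel" for j
  proof -
    define gg where "gg x = indicator (ball c r) x *\<^sub>R g x" for x
    define GG where "GG x = indicator (ball c r) x *\<^sub>R G1 j x" for x
    have m1[measurable]: "gg \<in> borel_measurable borel"
      unfolding gg_def[abs_def] by (rule borel_measurable_continuous_on_indicator) (auto simp: cg)
    have m2[measurable]: "GG \<in> borel_measurable borel"
      unfolding GG_def[abs_def] by (rule borel_measurable_continuous_on_indicator) (auto simp: cG1)
    have eqE: "E j = {x \<in> space borel. x \<in> ball c r \<and> dist_int (gg x) < \<delta> \<and> T \<le> \<bar>GG x\<bar>}"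
      by (auto simp: E_def gg_def GG_def indicator_def)
    have bb[measurable]: "ball c r \<in> sets borel" by simp
    have m3[measurable]: "(\<lambda>x. dist_int (gg x)) \<in> borel_measurable borel"
      by (rule measurable_compose[OF m1 dist_int_measurable])
    have m4[measurable]: "(\<lambda>x. \<bar>GG x\<bar>) \<in> borel_measurable borel" using m2 by measurable
    have "{x \<in> space borel. x \<in> ball c r \<and> dist_int (gg x) < \<delta> \<and> T \<le> \<bar>GG x\<bar>}
        = ball c r \<inter> ({x \<in> space borel. dist_int (gg x) < \<delta>} \<inter> {x \<in> space borel. T \<le> \<bar>GG x\<bar>})" by auto
    also have "\<dots> \<in> sets borel"
      by (intro sets.Int bb borel_measurable_less[OF m3 borel_measurable_const] borel_measurable_le[OF borel_measurable_const m4])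
    finally show ?thesis unfolding eqE .
  qed
  have lineE: "\<exists>W\<in>sets lborel. {t \<in> {-r..r}. x + t *\<^sub>R ?u j \<in> E j} \<subseteq> W
                  \<and> emeasure lborel W \<le> ennreal (312*\<delta>*r)" for x j
  proof (rule line1d[where \<phi> = "\<lambda>s. g (x + s *\<^sub>R ?u j)" and \<phi>' = "\<lambda>s. G1 j (x + s *\<^sub>R ?u j)",
                     OF Kpos h_def dpos hr])
    show "{t \<in> {-r..r}. x + t *\<^sub>R ?u j \<in> E j} \<subseteq> {-r..r}" by auto
    fix t assume "t \<in> {t \<in> {-r..r}. x + t *\<^sub>R ?u j \<in> E j}"
    then have tE: "x + t *\<^sub>R ?u j \<in> E j" by auto
    then have tb: "x + t *\<^sub>R ?u j \<in> ball c r" and d: "dist_int (g (x + t *\<^sub>R ?u j)) < \<delta>"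
      and TG: "T \<le> \<bar>G1 j (x + t *\<^sub>R ?u j)\<bar>" by (auto simp: E_def)
    have sin: "x + s *\<^sub>R ?u j \<in> ball c (2*r)" if "s \<in> {t-h..t+h}" for s
      using inball[OF tb, of s] that by (auto simp: abs_le_iff)
    have der: "((\<lambda>s. g (x + s *\<^sub>R ?u j)) has_real_derivative G1 j (x + s *\<^sub>R ?u j)) (at s)"
      if "s \<in> {t-h..t+h}" for s using derg sin[OF that] by blast
    have der2: "((\<lambda>s. G1 j (x + s *\<^sub>R ?u j)) has_real_derivative G2 j (x + s *\<^sub>R ?u j)) (at s)"
      if "s \<in> {t-h..t+h}" for s using derG1 sin[OF that] by blast
    have lip1: "\<bar>G1 j (x + b *\<^sub>R ?u j) - G1 j (x + a *\<^sub>R ?u j)\<bar> \<le> K * \<bar>b - a\<bar>"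
      if ab: "a \<in> {t-h..t+h}" "b \<in> {t-h..t+h}" "a \<le> b" for a b
    proof -
      obtain z where z: "z \<in> {t-h..t+h}"
        "G1 j (x + b *\<^sub>R ?u j) - G1 j (x + a *\<^sub>R ?u j) = (b - a) * G2 j (x + z *\<^sub>R ?u j)"
        using mvt_interval[where \<phi> = "\<lambda>s. G1 j (x + s *\<^sub>R ?u j)" and \<phi>' = "\<lambda>s. G2 j (x + s *\<^sub>R ?u j)",
              OF der2 ab] by blast
      have "\<bar>b - a\<bar> * \<bar>G2 j (x + z *\<^sub>R ?u j)\<bar> \<le> \<bar>b - a\<bar> * K"
        using G2le[OF sin[OF z(1)]] by (intro mult_left_mono) auto
      then show ?thesis using z(2) by (simp add: abs_mult mult.commute)
    qed
    have lip: "\<bar>G1 j (x + s *\<^sub>R ?u j) - G1 j (x + t *\<^sub>R ?u j)\<bar> \<le> K * \<bar>s - t\<bar>"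
      if s: "s \<in> {t-h..t+h}" for s
    proof -
      have tI: "t \<in> {t-h..t+h}" using hpos by auto
      show ?thesis using lip1[OF tI s] lip1[OF s tI] by (cases "t \<le> s") (auto simp: abs_minus_commute)
    qed
    show "dist_int (g (x + t *\<^sub>R ?u j)) < \<delta> \<and> sqrt K \<le> \<bar>G1 j (x + t *\<^sub>R ?u j)\<bar> \<and>
        (\<forall>s\<in>{t-h..t+h}. ((\<lambda>s. g (x + s *\<^sub>R ?u j)) has_real_derivative G1 j (x + s *\<^sub>R ?u j)) (at s) \<and>
            \<bar>G1 j (x + s *\<^sub>R ?u j) - G1 j (x + t *\<^sub>R ?u j)\<bar> \<le> K * \<bar>s - t\<bar>)"
      using d TG KT der lip by auto
  qed
  have ball2: "emeasure lborel (ball c (2*r)) = ennreal (2^D) * emeasure lborel (ball c r)"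
  proof -
    have "emeasure lborel (ball c (2*r)) = emeasure lebesgue (ball c (2*r))" by simp
    also have "\<dots> = ennreal ((2*r)^D) * emeasure lebesgue (ball (0::real^'d) 1)"
      using emeasure_lebesgue_ball_conv_unit_ball[of "2*r" c] rpos by (simp add: D_def)
    also have "\<dots> = ennreal (2^D) * (ennreal (r^D) * emeasure lebesgue (ball (0::real^'d) 1))"
      using rpos by (simp add: power_mult_distrib ennreal_mult mult.assoc)
    also have "\<dots> = ennreal (2^D) * emeasure lborel (ball c r)"
      using emeasure_lebesgue_ball_conv_unit_ball[of r c] rpos by (simp add: D_def)
    finally show ?thesis .
  qed
  have Ej_bound: "emeasure lborel (E j) \<le> ennreal (156 * 2^D * \<delta>) * emeasure lborel (ball c r)" for j
  proof -
    have Esub: "E j \<subseteq> ball c r" by (auto simp: E_def)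
    have F: "emeasure lborel (E j) * ennreal (2*r) \<le> ennreal (312*\<delta>*r) * emeasure lborel (ball c (2*r))"
      by (rule fubini_line[OF Em Esub rpos norm_axis_1 lineE])
    have "ennreal (312*\<delta>*r) * emeasure lborel (ball c (2*r))
          = ennreal (2*r) * (ennreal (156 * 2^D * \<delta>) * emeasure lborel (ball c r))"
    proof -
      have "ennreal (312*\<delta>*r) * ennreal (2^D) = ennreal (2*r) * ennreal (156 * 2^D * \<delta>)"
        using rpos dpos by (simp add: ennreal_mult'[symmetric] algebra_simps)
      then show ?thesis using ball2 by (simp add: mult.assoc[symmetric])
    qed
    then have "ennreal (2*r) * emeasure lborel (E j) \<le> ennreal (2*r) * (ennreal (156 * 2^D * \<delta>) * emeasure lborel (ball c r))"
      using F by (simp add: mult.commute)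
    then show ?thesis using rpos by (subst (asm) ennreal_mult_le_mult_iff) auto
  qed
  define S where "S = {x \<in> ball c r. dist_int (\<Sum>i<n. real_of_int (q i) * f i x) < \<delta> \<and>
                      grad_norm n f q x \<ge> sqrt (real n * real CARD('d) * L * qnorm n q)}"
  have sub: "S \<subseteq> (\<Union>j. E j)"
  proof
    fix x assume "x \<in> S"
    then have xb: "x \<in> ball c r" and d: "dist_int (g x) < \<delta>" and gn: "T \<le> grad_norm n f q x"
      by (auto simp: S_def g_def T_def D_def Q_def)
    have "grad_norm n f q x \<in> range (\<lambda>j. \<bar>G1 j x\<bar>)"
      unfolding grad_norm_def G1_def by (rule Max_in) auto
    then obtain j where "grad_norm n f q x = \<bar>G1 j x\<bar>" by auto
    then have "x \<in> E j" using xb d gn by (auto simp: E_def)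
    then show "x \<in> (\<Union>j. E j)" by auto
  qed
  have UE: "(\<Union>j. E j) \<in> sets borel" using Em by auto
  have "emeasure lebesgue S \<le> emeasure lebesgue (\<Union>j. E j)"
    by (rule emeasure_mono[OF sub]) (use UE in simp)
  also have "\<dots> = emeasure lborel (\<Union>j. E j)" using UE by simp
  also have "\<dots> \<le> (\<Sum>j\<in>UNIV. emeasure lborel (E j))"
    by (rule emeasure_subadditive_finite) (use Em in auto)
  also have "\<dots> \<le> (\<Sum>j\<in>(UNIV::'d set). ennreal (156 * 2^D * \<delta>) * emeasure lborel (ball c r))"
    by (intro sum_mono Ej_bound)
  also have "\<dots> = of_nat D * (ennreal (156 * 2^D * \<delta>) * emeasure lborel (ball c r))"
    by (simp add: D_def)
  also have "\<dots> = ennreal (real CARD('d) * (156 * 2 ^ CARD('d)) * \<delta>) * emeasure lebesgue (ball c r)"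
    using dpos by (simp add: D_def ennreal_of_nat_eq_real_of_nat ennreal_mult'[symmetric] mult.assoc[symmetric])
  finally show "emeasure lebesgue S \<le> ennreal (real CARD('d) * (156 * 2 ^ CARD('d)) * \<delta>) * emeasure lebesgue (ball c r)" .
qed
end
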